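(* Let $p\ge 5$ be a prime and $k$ an integer with $1\le k\le \frac{p-3}{2}$, and put $t=p-1-2k$. Then, modulo $p$, \[ (-1)^k 4^{2k-1} E_t \equiv 16^t S_t(0, \tfrac{1}{64}) + 2^t S_t(\tfrac{3}{8}, \tfrac{7}{16}) + (2^t + 4^t) S_t(\tfrac{7}{16}, \tfrac{15}{32}) + (2^t + 4^t + 8^t) S_t(\tfrac{15}{32}, \tfrac{31}{64}) + (2^t + 4^t + 8^t + 16^t) S_t(\tfrac{31}{64}, \tfrac{1}{2}). \]
   Context: $E_n$ denotes the $n$th Euler number, defined by $\sec z=\sum_{n\ge0}E_n\frac{z^n}{n!}$ (so $E_2=1$, $E_4=5$). For a prime $p$, an integer $\ell$ and real numbers $0\le x<y\le 1$, $S_\ell(x,y)=\sum_{xp<s<yp} s^\ell$, the sum over integers $s$ strictly between $xp$ and $yp$. Congruences between rational numbers modulo $p$ mean that the difference has $p$-adic valuation at least $1$. *)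

theory Defs
  imports "HOL-Computational_Algebra.Computational_Algebra"
begin

definition euler_num :: "nat \<Rightarrow> rat" where
  "euler_num n = fact n * fps_nth (inverse (fps_cos (1::rat))) n"

definition S_sum :: "int \<Rightarrow> nat \<Rightarrow> rat \<Rightarrow> rat \<Rightarrow> rat" where
  "S_sum l p x y = (\<Sum>s\<in>{s::int. x * of_nat p < of_int s \<and> of_int s < y * of_nat p}. (of_int s) powi l)"

text \<open>Congruence of rationals modulo a prime p: the difference has p-adic valuation at least 1.\<close>
definition qcong :: "nat \<Rightarrow> rat \<Rightarrow> rat \<Rightarrow> bool" where
  "qcong p a b \<longleftrightarrow> (\<exists>m n::int. a - b = of_int m / of_int n \<and> int p dvd m \<and> \<not> int p dvd n)"

end

theory Submission
  imports Defs "HOL-Number_Theory.Number_Theory"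
begin


definition pint :: "nat \<Rightarrow> rat \<Rightarrow> bool" where
  "pint p x \<longleftrightarrow> (\<exists>m n::int. x = of_int m / of_int n \<and> \<not> int p dvd n)"

lemma pint_of_int: "prime p \<Longrightarrow> pint p (of_int z)"
  unfolding pint_def by (rule exI[of _ z], rule exI[of _ 1]) (auto simp: prime_gt_1_nat)

lemma pint_add:
  assumes "prime p" "pint p x" "pint p y" shows "pint p (x + y)"
proof -
  obtain m1 n1 where 1: "x = of_int m1 / of_int n1" "\<not> int p dvd n1" using assms(2) pint_def by auto
  obtain m2 n2 where 2: "y = of_int m2 / of_int n2" "\<not> int p dvd n2" using assms(3) pint_def by auto
  have nz: "n1 \<noteq> 0" "n2 \<noteq> 0" using 1 2 by auto
  have pp: "prime (int p)" using assms(1) by simp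
  have "\<not> int p dvd n1 * n2" using 1 2 pp prime_dvd_mult_iff by blast
  moreover have "x + y = of_int (m1*n2 + m2*n1) / of_int (n1*n2)" using 1 2 nz by (simp add: field_simps)
  ultimately show ?thesis unfolding pint_def by blast
qed

lemma pint_mult:
  assumes "prime p" "pint p x" "pint p y" shows "pint p (x * y)"
proof -
  obtain m1 n1 where 1: "x = of_int m1 / of_int n1" "\<not> int p dvd n1" using assms(2) pint_def by auto
  obtain m2 n2 where 2: "y = of_int m2 / of_int n2" "\<not> int p dvd n2" using assms(3) pint_def by auto
  have pp: "prime (int p)" using assms(1) by simp
  have "\<not> int p dvd n1 * n2" using 1 2 pp prime_dvd_mult_iff by blast
  moreover have "x * y = of_int (m1*m2) / of_int (n1*n2)" using 1 2 by (simp add: field_simps)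
  ultimately show ?thesis unfolding pint_def by blast
qed

lemma pint_neg: "prime p \<Longrightarrow> pint p x \<Longrightarrow> pint p (- x)"
  using pint_mult[of p "-1" x] pint_of_int[of p "-1"] by simp

lemma pint_sum: "prime p \<Longrightarrow> (\<And>i. i \<in> A \<Longrightarrow> pint p (f i)) \<Longrightarrow> pint p (\<Sum>i\<in>A. f i)"
proof (induction A rule: infinite_finite_induct)
  case (infinite A) thus ?case using pint_of_int[of p 0] by simp
next
  case empty thus ?case using pint_of_int[of p 0] by simp
next
  case (insert x F) thus ?case using pint_add by simp
qed

lemma qcong_iff:
  assumes "prime p"
  shows "qcong p a b \<longleftrightarrow> (\<exists>y. pint p y \<and> a - b = of_nat p * y)"
proof
  assume "qcong p a b"
  then obtain m n where mn: "a - b = of_int m / of_int n" "int p dvd m" "\<not> int p dvd n" unfolding qcong_def by auto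
  obtain m' where "m = int p * m'" using mn(2) by auto
  hence "a - b = of_nat p * (of_int m' / of_int n)" using mn(1) by simp
  moreover have "pint p (of_int m' / of_int n)" using mn(3) unfolding pint_def by blast
  ultimately show "\<exists>y. pint p y \<and> a - b = of_nat p * y" by blast
next
  assume "\<exists>y. pint p y \<and> a - b = of_nat p * y"
  then obtain y m n where "a - b = of_nat p * y" "y = of_int m / of_int n" "\<not> int p dvd n" unfolding pint_def by auto
  hence "a - b = of_int (int p * m) / of_int n" by simp
  thus "qcong p a b" unfolding qcong_def using \<open>\<not> int p dvd n\<close> dvd_triv_left by blast
qed

lemma qcong_refl: "prime p \<Longrightarrow> qcong p a a"
  using qcong_iff[of p a a] pint_of_int[of p 0] by auto

lemma qcong_sym: "prime p \<Longrightarrow> qcong p a b \<Longrightarrow> qcong p b a"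
  unfolding qcong_iff by (metis minus_diff_eq mult_minus_right pint_neg)

lemma qcong_trans: "prime p \<Longrightarrow> qcong p a b \<Longrightarrow> qcong p b c \<Longrightarrow> qcong p a c"
proof -
  assume p: "prime p" and "qcong p a b" "qcong p b c"
  then obtain y z where "pint p y" "a - b = of_nat p * y" "pint p z" "b - c = of_nat p * z" 
    unfolding qcong_iff[OF p] by auto
  hence "a - c = of_nat p * (y + z)" "pint p (y+z)" using pint_add p by (auto simp: algebra_simps)
  thus ?thesis unfolding qcong_iff[OF p] by blast
qed

lemma qcong_add: "prime p \<Longrightarrow> qcong p a b \<Longrightarrow> qcong p c d \<Longrightarrow> qcong p (a + c) (b + d)"
proof -
  assume p: "prime p" and "qcong p a b" "qcong p c d"
  then obtain y z where "pint p y" "a - b = of_nat p * y" "pint p z" "c - d = of_nat p * z" 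
    unfolding qcong_iff[OF p] by auto
  hence "(a + c) - (b + d) = of_nat p * (y + z)" "pint p (y+z)" using pint_add p by (auto simp: algebra_simps)
  thus ?thesis unfolding qcong_iff[OF p] by blast
qed

lemma qcong_mult: "prime p \<Longrightarrow> pint p c \<Longrightarrow> qcong p a b \<Longrightarrow> qcong p (c * a) (c * b)"
proof -
  assume p: "prime p" and c: "pint p c" and "qcong p a b"
  then obtain y where "pint p y" "a - b = of_nat p * y"
    unfolding qcong_iff[OF p] by auto
  hence "c * a - c * b = of_nat p * (c * y)" "pint p (c * y)" using pint_mult p c by (auto simp: algebra_simps)
  thus ?thesis unfolding qcong_iff[OF p] by blast
qed

lemma qcong_neg: "prime p \<Longrightarrow> qcong p a b \<Longrightarrow> qcong p (- a) (- b)"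
  using qcong_mult[of p "-1" a b] pint_of_int[of p "-1"] by simp

lemma qcong_sum: "prime p \<Longrightarrow> (\<And>i. i \<in> A \<Longrightarrow> qcong p (f i) (g i)) \<Longrightarrow> qcong p (\<Sum>i\<in>A. f i) (\<Sum>i\<in>A. g i)"
proof (induction A rule: infinite_finite_induct)
  case (infinite A) thus ?case using qcong_refl by simp
next
  case empty thus ?case using qcong_refl by simp
next
  case (insert x F) thus ?case using qcong_add by simp
qed

lemma qcong_of_int: "prime p \<Longrightarrow> [x = y] (mod int p) \<Longrightarrow> qcong p (of_int x) (of_int y)"
proof -
  assume p: "prime p" and "[x = y] (mod int p)"
  then obtain z where "x - y = int p * z" by (metis cong_iff_dvd_diff dvdE)
  hence "of_int x - of_int y = of_nat p * (of_int z :: rat)" by (metis of_int_diff of_int_mult of_int_of_nat_eq)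
  thus ?thesis unfolding qcong_iff[OF p] using pint_of_int[OF p] by blast
qed


lemma euler_rec:
  assumes "n \<ge> 1"
  shows "(\<Sum>i\<le>n. (if even i then (-1)^(i div 2) * of_nat (n choose i) * euler_num (n-i) else 0)) = 0"
proof -
  let ?c = "fps_cos (1::rat)"
  have c0: "?c $ 0 \<noteq> 0" by simp
  have "(?c * inverse ?c) $ n = 0" using inverse_mult_eq_1'[OF c0] assms by simp
  hence "(\<Sum>i=0..n. ?c$i * inverse ?c $(n - i)) = 0" by (simp add: fps_mult_nth)
  hence "fact n * (\<Sum>i=0..n. ?c$i * inverse ?c $(n - i)) = 0" by simp
  moreover have "fact n * (\<Sum>i=0..n. ?c$i * inverse ?c $(n - i)) = 
     (\<Sum>i\<le>n. (if even i then (-1)^(i div 2) * of_nat (n choose i) * euler_num (n-i) else 0))"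
    unfolding sum_distrib_left atLeast0AtMost
  proof (rule sum.cong[OF refl])
    fix i assume i: "i \<in> {..n}"
    hence "(of_nat (n choose i) :: rat) = fact n / (fact i * fact (n-i))"
      by (simp add: binomial_fact)
    thus "fact n * (?c$i * inverse ?c $(n - i)) = (if even i then (-1)^(i div 2) * of_nat (n choose i) * euler_num (n-i) else 0)"
      by (simp add: fps_cos_def euler_num_def field_simps)
  qed
  ultimately show ?thesis by simp
qed

definition esg :: "nat \<Rightarrow> rat" where "esg n = (-1)^(n div 2) * euler_num n"

lemma neg1_pow_diff: "a \<le> b \<Longrightarrow> (-1::rat)^(b - a) = (-1)^b * (-1)^a"
proof -
  assume "a \<le> b"
  hence "(-1::rat)^b = (-1)^(b-a) * (-1)^a" by (metis le_add_diff_inverse2 power_add)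
  hence "(-1::rat)^b * (-1)^a = (-1)^(b-a) * ((-1)^a * (-1)^a)" by simp
  also have "(-1::rat)^a * (-1)^a = 1" by (simp add: power_add[symmetric]) 
  finally show ?thesis by simp
qed

lemma esg_rec:
  assumes "n \<ge> 1"
  shows "(\<Sum>i\<le>n. (if even i then of_nat (n choose i) * esg (n-i) else 0)) = 0"
proof -
  have "(\<Sum>i\<le>n. (if even i then of_nat (n choose i) * esg (n-i) else 0)) =
    (-1)^(n div 2) * (\<Sum>i\<le>n. (if even i then (-1)^(i div 2) * of_nat (n choose i) * euler_num (n-i) else 0))"
    unfolding sum_distrib_left
  proof (rule sum.cong[OF refl])
    fix i assume i: "i \<in> {..n}"
    show "(if even i then of_nat (n choose i) * esg (n-i) else 0) = (-1)^(n div 2) * (if even i then (-1)^(i div 2) * of_nat (n choose i) * euler_num (n-i) else 0)"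
    proof (cases "even i")
      case True
      hence "(n - i) div 2 = n div 2 - i div 2" using i by auto
      moreover have "i div 2 \<le> n div 2" using i by (simp add: div_le_mono)
      ultimately have "(-1::rat)^((n-i) div 2) = (-1)^(n div 2) * (-1)^(i div 2)" using neg1_pow_diff by simp
      thus ?thesis using True by (simp add: esg_def)
    qed simp
  qed
  thus ?thesis using euler_rec[OF assms] by simp
qed

definition Dp :: "nat \<Rightarrow> nat \<Rightarrow> int" where
  "Dp p n = (\<Sum>j<p. (-1)^j * (2 * int j + 1)^n)"

lemma binom_even:
  "2 * (\<Sum>i\<le>n. if even i then int (n choose i) * x^(n-i) else 0) = (x+1)^n + (x-1)^n"
proof -
  have "(x+1)^n = (\<Sum>i\<le>n. int (n choose i) * 1^i * x^(n-i))" using binomial_ring[of 1 x n] by (simp add: add.commute)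
  moreover have "(x-1)^n = (\<Sum>i\<le>n. int (n choose i) * (-1)^i * x^(n-i))" using binomial_ring[of "-1" x n] by (simp add: add.commute)
  ultimately have "(x+1)^n + (x-1)^n = (\<Sum>i\<le>n. int (n choose i) * (1 + (-1)^i) * x^(n-i))"
    by (simp add: sum.distrib[symmetric] algebra_simps)
  also have "\<dots> = (\<Sum>i\<le>n. 2 * (if even i then int (n choose i) * x^(n-i) else 0))"
    by (rule sum.cong) auto
  finally show ?thesis by (simp add: sum_distrib_left)
qed

lemma telescope:
  "(\<Sum>j<N. (-1)^j * ((g (Suc j)::int) + g j)) = g 0 - (-1)^N * g N"
  by (induction N) (auto simp: algebra_simps)

lemma Dp_rec:
  assumes "odd p" "n \<ge> 1"
  shows "2 * (\<Sum>i\<le>n. if even i then int (n choose i) * Dp p (n-i) else 0) = (2 * int p)^n"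
proof -
  have "(\<Sum>i\<le>n. if even i then int (n choose i) * Dp p (n-i) else 0)
     = (\<Sum>i\<le>n. \<Sum>j<p. if even i then int (n choose i) * ((-1)^j * (2 * int j + 1)^(n-i)) else 0)"
    unfolding Dp_def by (rule sum.cong) (auto simp: sum_distrib_left)
  also have "\<dots> = (\<Sum>j<p. \<Sum>i\<le>n. if even i then int (n choose i) * ((-1)^j * (2 * int j + 1)^(n-i)) else 0)"
    by (rule sum.swap)
  also have "\<dots> = (\<Sum>j<p. (-1)^j * (\<Sum>i\<le>n. if even i then int (n choose i) * (2 * int j + 1)^(n-i) else 0))"
    by (rule sum.cong[OF refl]) (auto simp: sum_distrib_left intro!: sum.cong)
  finally have "2 * (\<Sum>i\<le>n. if even i then int (n choose i) * Dp p (n-i) else 0)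
     = (\<Sum>j<p. (-1)^j * (2 * (\<Sum>i\<le>n. if even i then int (n choose i) * (2 * int j + 1)^(n-i) else 0)))"
    by (simp add: sum_distrib_left algebra_simps)
  also have "\<dots> = (\<Sum>j<p. (-1)^j * ((2 * int (Suc j))^n + (2 * int j)^n))"
    unfolding binom_even by (auto intro!: sum.cong simp: algebra_simps)
  also have "\<dots> = (2 * int 0)^n - (-1)^p * (2 * int p)^n"
    by (rule telescope[of "\<lambda>j. (2 * int j)^n"])
  finally show ?thesis using assms by simp
qed

lemma Dp_0: "odd p \<Longrightarrow> Dp p 0 = 1"
proof -
  have "(\<Sum>j<N. (-1::int)^j) = (if odd N then 1 else 0)" for N by (induction N) auto
  thus "odd p \<Longrightarrow> Dp p 0 = 1" unfolding Dp_def by simp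
qed

lemma esg_Dp:
  assumes p: "prime p" "odd p"
  shows "qcong p (esg n) (of_int (Dp p n))"
proof (induction n rule: less_induct)
  case (less n)
  show ?case
  proof (cases "n = 0")
    case True
    thus ?thesis using Dp_0[OF p(2)] qcong_refl[OF p(1)] by (simp add: esg_def euler_num_def)
  next
    case False
    hence n1: "n \<ge> 1" by simp
    define X where "X = (\<Sum>i\<in>{1..n}. if even i then int (n choose i) * Dp p (n-i) else 0)"
    define Y where "Y = (\<Sum>i\<in>{1..n}. if even i then of_nat (n choose i) * esg (n-i) else 0)"
    have split: "{..n} = insert 0 {1..n}" by auto
    have "(\<Sum>i\<le>n. (if even i then of_nat (n choose i) * esg (n-i) else 0)) = esg n + Y"
      unfolding Y_def split by (subst sum.insert) auto
    hence ey: "esg n = - Y" using esg_rec[OF n1] by simp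
    have "(\<Sum>i\<le>n. if even i then int (n choose i) * Dp p (n-i) else 0) = Dp p n + X"
      unfolding X_def split by (subst sum.insert) auto
    hence dx: "2 * (Dp p n + X) = (2 * int p)^n" using Dp_rec[OF p(2) n1] by simp
    have "int p dvd (2 * int p)^n" using n1 by (simp add: dvd_power)
    hence "int p dvd 2 * (Dp p n + X)" using dx by simp
    moreover have "\<not> int p dvd 2"
    proof
      assume "int p dvd 2"
      hence "p dvd 2" by (metis int_dvd_int_iff of_nat_numeral)
      hence "p \<le> 2" by (simp add: dvd_imp_le)
      moreover have "p \<ge> 2" using p(1) prime_ge_2_nat by blast
      ultimately show False using p(2) by simp
    qed
    moreover have "prime (int p)" using p by simp
    ultimately have "int p dvd Dp p n + X" using prime_dvd_mult_iff by blast
    hence c1: "[Dp p n = - X] (mod int p)" by (simp add: cong_iff_dvd_diff)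
    have c2: "qcong p Y (of_int X)"
      unfolding X_def Y_def of_int_sum
    proof (rule qcong_sum[OF p(1)])
      fix i assume i: "i \<in> {1..n}"
      hence "qcong p (esg (n-i)) (of_int (Dp p (n-i)))" using less by auto
      hence "qcong p (of_nat (n choose i) * esg (n-i)) (of_nat (n choose i) * of_int (Dp p (n-i)))"
        using qcong_mult[OF p(1) pint_of_int[OF p(1), of "int (n choose i)"]] by simp
      thus "qcong p (if even i then of_nat (n choose i) * esg (n-i) else 0)
            (of_int (if even i then int (n choose i) * Dp p (n-i) else 0))"
        using qcong_refl[OF p(1)] by auto
    qed
    have "qcong p (esg n) (of_int (- X))" using ey qcong_neg[OF p(1) c2] by simp
    moreover have "qcong p (of_int (- X)) (of_int (Dp p n))"
      using qcong_of_int[OF p(1), of "- X" "Dp p n"] c1 cong_sym by (metis of_int_minus)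
    ultimately show ?thesis using qcong_trans[OF p(1)] by blast
  qed
qed


lemma powsum_zero:
  assumes p: "prime p" and t: "0 < t" "t < p - 1"
  shows "[(\<Sum>s\<in>{1..p-1}. (s::nat)^t) = 0] (mod p)"
proof -
  obtain g where g: "residue_primroot p g" using prime_primitive_root_exists[OF prime_gt_1_nat[OF p] p] by blast
  have cop: "coprime p g" and ordg: "ord p g = p - 1"
    using g p by (auto simp: residue_primroot_def totient_prime)
  define A where "A = {1..p-1}"
  define h where "h s = g * s mod p" for s
  have inj: "inj_on h A"
  proof
    fix x y assume x: "x \<in> A" and y: "y \<in> A" and "h x = h y"
    hence "[g * x = g * y] (mod p)" by (simp add: h_def cong_def)
    hence "[x = y] (mod p)" using cop cong_mult_lcancel_nat[of g p x y] by (simp add: coprime_commute)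
    moreover have "x < p" "y < p" using x y p prime_gt_0_nat unfolding A_def by auto
    ultimately show "x = y" by (simp add: cong_def)
  qed
  have sub: "h ` A \<subseteq> A"
  proof
    fix z assume "z \<in> h ` A"
    then obtain s where s: "s \<in> A" "z = h s" by auto
    have "\<not> p dvd g"
    proof
      assume "p dvd g" hence "is_unit p" using coprime_common_divisor[OF cop dvd_refl] by blast
      thus False using p by simp
    qed
    moreover have "\<not> p dvd s" using s p unfolding A_def by (auto dest: dvd_imp_le)
    ultimately have "\<not> p dvd g * s" using p prime_dvd_mult_iff by blast
    hence "z \<noteq> 0" using s by (simp add: h_def dvd_eq_mod_eq_0)
    moreover have "z < p" using s p prime_gt_0_nat by (simp add: h_def)
    ultimately show "z \<in> A" unfolding A_def by auto
  qed
  have img: "h ` A = A" using endo_inj_surj[OF _ sub inj] unfolding A_def by simp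
  define S where "S = (\<Sum>s\<in>A. s^t)"
  have "S = (\<Sum>s\<in>h ` A. s^t)" using img by (simp add: S_def)
  also have "\<dots> = (\<Sum>s\<in>A. (h s)^t)" using sum.reindex[OF inj] by simp
  moreover have "[(\<Sum>s\<in>A. (h s)^t) = (\<Sum>s\<in>A. (g*s)^t)] (mod p)"
  proof (rule cong_sum)
    fix s show "[(h s)^t = (g*s)^t] (mod p)" unfolding h_def cong_def by (rule power_mod)
  qed
  ultimately have "[S = (\<Sum>s\<in>A. (g*s)^t)] (mod p)" by simp
  hence "[S = g^t * S] (mod p)" by (simp add: S_def power_mult_distrib sum_distrib_left)
  hence "[int S = int g^t * int S] (mod int p)" using cong_int_iff[of S "g^t*S" p] by simp
  hence "int p dvd int S * (int g^t - 1)" by (simp add: cong_iff_dvd_diff algebra_simps dvd_diff_commute)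
  moreover have "prime (int p)" using p by simp
  ultimately have "int p dvd int S \<or> int p dvd (int g^t - 1)" using prime_dvd_mult_iff by blast
  moreover have "\<not> int p dvd (int g^t - 1)"
  proof
    assume "int p dvd (int g^t - 1)"
    hence "[int g^t = 1] (mod int p)" by (simp add: cong_iff_dvd_diff)
    hence "[g^t = 1] (mod p)" using cong_int_iff[of "g^t" 1 p] by simp
    hence "(p - 1) dvd t" using ordg ord_divides[of g t p] by simp
    thus False using t by (auto dest: dvd_imp_le)
  qed
  ultimately have "p dvd S" by simp
  thus ?thesis by (simp add: S_def A_def cong_0_iff)
qed


lemma refl_cong: "even t \<Longrightarrow> [((P::int) - x)^t = x^t] (mod P)"
proof -
  assume t: "even t"
  have "[P - x = - x] (mod P)" by (simp add: cong_iff_dvd_diff)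
  hence "[(P - x)^t = (-x)^t] (mod P)" by (rule cong_pow)
  thus ?thesis using t by simp
qed

lemma shift_cong: "[((P::int) + x)^t = x^t] (mod P)"
proof -
  have "[P + x = x] (mod P)" by (simp add: cong_iff_dvd_diff)
  thus ?thesis by (rule cong_pow)
qed

lemma even_part: "(\<Sum>s\<in>{s\<in>S. even (s::int)}. f s) = (\<Sum>r\<in>{r. 2*r \<in> S}. f (2*r))"
  by (rule sum.reindex_bij_witness[of _ "\<lambda>r. 2*r" "\<lambda>s. s div 2"]) auto

lemma odd_part: "odd (P::int) \<Longrightarrow> (\<Sum>s\<in>{s\<in>S. odd (s::int)}. f s) = (\<Sum>r\<in>{r. P - 2*r \<in> S}. f (P - 2*r))"
  apply (rule sum.reindex_bij_witness[of _ "\<lambda>r. P - 2*r" "\<lambda>s. (P - s) div 2"]) 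
  apply auto
  done

lemma split_parity: "finite S \<Longrightarrow> (\<Sum>s\<in>S. f s) = (\<Sum>s\<in>{s\<in>S. even (s::int)}. f s) + (\<Sum>s\<in>{s\<in>S. odd s}. f s)"
proof -
  assume fin: "finite S"
  have "S = {s\<in>S. even s} \<union> {s\<in>S. odd s}" by auto
  moreover have "{s\<in>S. even s} \<inter> {s\<in>S. odd s} = {}" by auto
  ultimately show ?thesis using fin sum.union_disjoint[of "{s\<in>S. even s}" "{s\<in>S. odd s}" f]
    by (metis (no_types, lifting) finite_Un)
qed

lemma scale:
  fixes P c :: int
  assumes P: "odd P" "P > 0" and c: "c > 0" and t: "even t"
  shows "[(\<Sum>s\<in>{s. 0<s \<and> c*s<P}. s^t) = 2^t * (\<Sum>r\<in>{r. 0<r \<and> 2*c*r<P}. r^t) + 2^t * (\<Sum>r\<in>{r. 2*r<P \<and> (c-1)*P < 2*c*r}. r^t)] (mod P)"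
proof -
  define S where "S = {s. 0<s \<and> c*s<P}"
  define R1 where "R1 = {r. 0<r \<and> 2*c*r<P}"
  define R2 where "R2 = {r. 2*r<P \<and> (c-1)*P < 2*c*r}"
  have "S \<subseteq> {0..P}"
  proof
    fix s assume "s \<in> S"
    hence "0 < s" "c * s < P" by (auto simp: S_def)
    moreover have "1 * s \<le> c * s" using c \<open>0 < s\<close> by (intro mult_right_mono) auto
    ultimately have "s \<le> P" by linarith
    thus "s \<in> {0..P}" using \<open>0 < s\<close> by simp
  qed
  hence finS: "finite S" by (rule finite_subset) simp
  have e1: "{r. 2*r \<in> S} = R1" by (auto simp: S_def R1_def algebra_simps)
  have e2: "{r. P - 2*r \<in> S} = R2" by (auto simp: S_def R2_def algebra_simps)
  have "(\<Sum>s\<in>S. s^t) = (\<Sum>r\<in>R1. (2*r)^t) + (\<Sum>r\<in>R2. (P - 2*r)^t)"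
    using split_parity[OF finS, of "\<lambda>s. s^t"] even_part[where S=S and f="\<lambda>s. s^t"] odd_part[OF P(1), where S=S and f="\<lambda>s. s^t"] e1 e2
    by (simp only:)
  moreover have "[(\<Sum>r\<in>R2. (P - 2*r)^t) = (\<Sum>r\<in>R2. (2*r)^t)] (mod P)"
    by (rule cong_sum) (rule refl_cong[OF t])
  ultimately have "[(\<Sum>s\<in>S. s^t) = (\<Sum>r\<in>R1. (2*r)^t) + (\<Sum>r\<in>R2. (2*r)^t)] (mod P)"
    using cong_add[OF cong_refl] by simp
  thus ?thesis unfolding S_def R1_def R2_def power_mult_distrib sum_distrib_left[symmetric] .
qed


lemma odd_prime_not_dvd2: "prime p \<Longrightarrow> odd p \<Longrightarrow> \<not> int p dvd 2"
proof
  assume p: "prime p" "odd p" and "int p dvd 2"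
  hence "p dvd 2" using int_dvd_int_iff[of p 2] by simp
  hence "p \<le> 2" by (simp add: dvd_imp_le)
  moreover have "p \<ge> 2" using p(1) prime_ge_2_nat by blast
  ultimately show False using p(2) by simp
qed

lemma cancel2: "prime p \<Longrightarrow> odd p \<Longrightarrow> [2 * x = 0] (mod int p) \<Longrightarrow> [x = 0] (mod int p)"
  using odd_prime_not_dvd2[of p] prime_dvd_mult_iff[of "int p" 2 x]
  by (simp add: cong_0_iff)

lemma H0:
  assumes p: "prime p" "p = 2*m+1" and t: "even t" "0 < t" "t < p - 1"
  shows "[(\<Sum>u\<in>{1..m}. (int u)^t) = 0] (mod int p)"
proof -
  have "[(\<Sum>s\<in>{1..p-1}. s^t) = 0] (mod p)" using powsum_zero[OF p(1) t(2,3)] .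
  hence "[int (\<Sum>s\<in>{1..p-1}. s^t) = int 0] (mod int p)" by (rule cong_int_iff[THEN iffD2])
  moreover have "p - 1 = m + m" using p(2) by simp
  ultimately have c1: "[(\<Sum>s\<in>{1..m+m}. (int s)^t) = 0] (mod int p)" by (simp only: of_nat_sum of_nat_power of_nat_0)
  have f1: "(\<Sum>s\<in>{1..m+m}. (int s)^t) = (\<Sum>s\<in>{1..m}. (int s)^t) + (\<Sum>s\<in>{m+1..m+m}. (int s)^t)"
    by (rule sum.ub_add_nat) simp
  have f2: "(\<Sum>s\<in>{m+1..m+m}. (int s)^t) = (\<Sum>u\<in>{1..m}. (int p - int u)^t)"
    by (rule sum.reindex_bij_witness[of _ "\<lambda>u. p - u" "\<lambda>s. p - s"]) (use p in auto)
  have f3: "[(\<Sum>u\<in>{1..m}. (int p - int u)^t) = (\<Sum>u\<in>{1..m}. (int u)^t)] (mod int p)"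
    by (rule cong_sum) (rule refl_cong[OF t(1)])
  have "[(\<Sum>s\<in>{1..m+m}. (int s)^t) = (\<Sum>u\<in>{1..m}. (int u)^t) + (\<Sum>u\<in>{1..m}. (int u)^t)] (mod int p)"
    unfolding f1 f2 by (rule cong_add[OF cong_refl f3])
  hence "[(\<Sum>s\<in>{1..m+m}. (int s)^t) = 2 * (\<Sum>u\<in>{1..m}. (int u)^t)] (mod int p)"
    by (simp only: mult_2)
  hence "[2 * (\<Sum>u\<in>{1..m}. (int u)^t) = 0] (mod int p)" using c1 using cong_sym cong_trans by blast
  moreover have "odd p" using p(2) by simp
  ultimately show ?thesis using cancel2[OF p(1)] by blast
qed


lemma neg1_pow_diff_int: "a \<le> b \<Longrightarrow> (-1::int)^(b - a) = (-1)^b * (-1)^a"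
proof -
  assume "a \<le> b"
  hence "(-1::int)^b = (-1)^(b-a) * (-1)^a" by (metis le_add_diff_inverse2 power_add)
  hence "(-1::int)^b * (-1)^a = (-1)^(b-a) * ((-1)^a * (-1)^a)" by simp
  also have "(-1::int)^a * (-1)^a = 1" by (simp add: power_add[symmetric])
  finally show ?thesis by simp
qed

lemma Dp_W:
  assumes p: "p = 2*m+1" and t: "even t" "0 < t"
  shows "[Dp p t = 2 * (-1)^m * 2^t * (\<Sum>u\<in>{1..m}. (-1)^u * (int u)^t)] (mod int p)"
proof -
  define g where "g j = (-1::int)^j * (2 * int j + 1)^t" for j
  have "Dp p t = (\<Sum>j\<in>{0..<p}. g j)" unfolding Dp_def g_def by (simp add: atLeast0LessThan)
  also have "\<dots> = (\<Sum>j\<in>{0..<m}. g j) + (\<Sum>j\<in>{m..<p}. g j)"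
    by (rule sum.atLeastLessThan_concat[symmetric]) (use p in auto)
  also have "(\<Sum>j\<in>{m..<p}. g j) = g m + (\<Sum>j\<in>{Suc m..<p}. g j)"
    by (rule sum.atLeast_Suc_lessThan) (use p in auto)
  also have "(\<Sum>j\<in>{Suc m..<p}. g j) = (\<Sum>u\<in>{1..m}. g (m + u))"
    by (rule sum.reindex_bij_witness[of _ "\<lambda>u. m + u" "\<lambda>j. j - m"]) (use p in auto)
  also have "(\<Sum>j\<in>{0..<m}. g j) = (\<Sum>u\<in>{1..m}. g (m - u))"
    by (rule sum.reindex_bij_witness[of _ "\<lambda>j. m - j" "\<lambda>u. m - u"]) auto
  finally have e: "Dp p t = g m + (\<Sum>u\<in>{1..m}. g (m - u) + g (m + u))"
    by (simp add: sum.distrib)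
  have gm: "[g m = 0] (mod int p)"
  proof -
    have "g m = (-1)^m * (int p)^t" unfolding g_def using p by (simp add: add.commute)
    moreover have "int p dvd (int p)^t" using t(2) by (simp add: dvd_power)
    ultimately show ?thesis by (simp add: cong_0_iff)
  qed
  have terms: "[g (m - u) + g (m + u) = 2 * (-1)^m * 2^t * ((-1)^u * (int u)^t)] (mod int p)"
    if u: "u \<in> {1..m}" for u
  proof -
    have s1: "(-1::int)^(m-u) = (-1)^m * (-1)^u" using u neg1_pow_diff_int by simp
    have s2: "2 * int (m - u) + 1 = int p - 2 * int u" using u p by auto
    have "g (m - u) = (-1)^m * (-1)^u * (int p - 2 * int u)^t" unfolding g_def s1 s2 ..
    moreover have "g (m + u) = (-1)^m * (-1)^u * (int p + 2 * int u)^t" unfolding g_def using p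
      by (simp add: power_add algebra_simps)
    moreover have "[(int p - 2 * int u)^t = (2 * int u)^t] (mod int p)" by (rule refl_cong[OF t(1)])
    moreover have "[(int p + 2 * int u)^t = (2 * int u)^t] (mod int p)" by (rule shift_cong)
    ultimately have "[g (m - u) + g (m + u) = (-1)^m * (-1)^u * (2 * int u)^t + (-1)^m * (-1)^u * (2 * int u)^t] (mod int p)"
      by (metis cong_add cong_scalar_left)
    thus ?thesis by (simp add: power_mult_distrib algebra_simps)
  qed
  have "[Dp p t = 0 + (\<Sum>u\<in>{1..m}. 2 * (-1)^m * 2^t * ((-1)^u * (int u)^t))] (mod int p)"
    unfolding e by (rule cong_add[OF gm cong_sum[OF terms]])
  thus ?thesis by (simp add: sum_distrib_left)
qed

lemma W_A:
  "(\<Sum>u\<in>{1..m}. (-1)^u * (int u)^t) + (\<Sum>u\<in>{1..m}. (int u)^t) = 2 * 2^t * (\<Sum>r\<in>{1..m div 2}. (int r)^t)"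
proof -
  have "(\<Sum>u\<in>{1..m}. (-1)^u * (int u)^t) + (\<Sum>u\<in>{1..m}. (int u)^t) = (\<Sum>u\<in>{1..m}. if even u then 2 * (int u)^t else 0)"
    by (simp add: sum.distrib[symmetric]) (rule sum.cong, auto)
  also have "\<dots> = (\<Sum>u\<in>{u\<in>{1..m}. even u}. 2 * (int u)^t)"
    by (rule sum.inter_filter[symmetric]) simp
  also have "\<dots> = (\<Sum>r\<in>{1..m div 2}. 2 * (int (2*r))^t)"
    by (rule sum.reindex_bij_witness[of _ "\<lambda>r. 2*r" "\<lambda>u. u div 2"]) auto
  finally show ?thesis by (simp add: sum_distrib_left power_mult_distrib algebra_simps)
qed

lemma A_int: "p = 2*m+1 \<Longrightarrow> (\<Sum>r\<in>{1..m div 2}. (int r)^t) = (\<Sum>s\<in>{s::int. 0<s \<and> 4*s<int p}. s^t)"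
  by (rule sum.reindex_bij_witness[of _ nat int]) auto


lemma S_sum_int: "S_sum (int t) p x y = of_int (\<Sum>s\<in>{s::int. x*of_nat p < of_int s \<and> of_int s < y*of_nat p}. s^t)"
  unfolding S_sum_def by (simp add: power_int_of_nat)

lemma S_gen:
  assumes "x = of_int a / of_int b" "y = of_int c / of_int d" "b > 0" "d > 0"
  shows "S_sum (int t) p x y = of_int (\<Sum>s\<in>{s::int. a * int p < b * s \<and> d * s < c * int p}. s^t)"
proof -
  have "x*of_nat p < of_int s \<longleftrightarrow> (of_int (a * int p)::rat) < of_int (b * s)" for s
    unfolding assms(1) using assms(3) by (simp add: field_simps)
  moreover have "of_int s < y*of_nat p \<longleftrightarrow> (of_int (d * s)::rat) < of_int (c * int p)" for s
    unfolding assms(2) using assms(4) by (simp add: field_simps)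
  ultimately have "{s::int. x*of_nat p < of_int s \<and> of_int s < y*of_nat p} = {s::int. a * int p < b * s \<and> d * s < c * int p}"
    by (simp only: of_int_less_iff)
  thus ?thesis unfolding S_sum_int by simp
qed

lemma S1: "S_sum (int t) p 0 (1/64) = of_int (\<Sum>s\<in>{s::int. 0 * int p < 1 * s \<and> 64 * s < 1 * int p}. s^t)"
  by (rule S_gen) auto
lemma S2: "S_sum (int t) p (3/8) (7/16) = of_int (\<Sum>s\<in>{s::int. 3 * int p < 8 * s \<and> 16 * s < 7 * int p}. s^t)"
  by (rule S_gen) auto
lemma S3: "S_sum (int t) p (7/16) (15/32) = of_int (\<Sum>s\<in>{s::int. 7 * int p < 16 * s \<and> 32 * s < 15 * int p}. s^t)"
  by (rule S_gen) auto
lemma S4: "S_sum (int t) p (15/32) (31/64) = of_int (\<Sum>s\<in>{s::int. 15 * int p < 32 * s \<and> 64 * s < 31 * int p}. s^t)"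
  by (rule S_gen) auto
lemma S5: "S_sum (int t) p (31/64) (1/2) = of_int (\<Sum>s\<in>{s::int. 31 * int p < 64 * s \<and> 2 * s < 1 * int p}. s^t)"
  by (rule S_gen) auto


lemma split_sum3:
  assumes "finite A" "A = B \<union> C" "B \<inter> C = {}"
  shows "sum f A = sum f B + sum f C"
  using assms sum.union_disjoint by (metis finite_Un)

lemma chain:
  fixes P :: int and t :: nat
  assumes P: "odd P" "P > 0" and t: "even t"
  defines "F c \<equiv> (\<Sum>s\<in>{s. 0<s \<and> c*s<P}. s^t)"
  defines "T a b c d \<equiv> (\<Sum>s\<in>{s. a*P < b*s \<and> d*s < c*P}. s^t)"
  shows "[F 4 = 16^t * T 0 1 1 64 + 2^t * T 3 8 7 16 + (2^t + 4^t) * T 7 16 15 32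
           + (2^t + 4^t + 8^t) * T 15 32 31 64 + (2^t + 4^t + 8^t + 16^t) * T 31 64 1 2] (mod P)"
proof -
  define G where "G a b \<equiv> (\<Sum>r\<in>{r. 2*r<P \<and> a*P < b*r}. r^t)" for a b
  have sc: "[F c = 2^t * F (2*c) + 2^t * G (c-1) (2*c)] (mod P)" if "c > 0" for c
    using scale[OF P that t] unfolding F_def G_def by (simp add: mult.assoc)
  have c4: "[F 4 = 2^t * F 8 + 2^t * G 3 8] (mod P)" using sc[of 4] by simp
  have c8: "[F 8 = 2^t * F 16 + 2^t * G 7 16] (mod P)" using sc[of 8] by simp
  have c16: "[F 16 = 2^t * F 32 + 2^t * G 15 32] (mod P)" using sc[of 16] by simp
  have c32: "[F 32 = 2^t * F 64 + 2^t * G 31 64] (mod P)" using sc[of 32] by simp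
  have f64: "F 64 = T 0 1 1 64" unfolding F_def T_def by simp
  have fin: "finite {r. 2*r<P \<and> a*P < b*r}" if "a \<ge> 0" "b > 0" for a b
  proof (rule finite_subset[of _ "{0..P}"])
    show "{r. 2*r<P \<and> a*P < b*r} \<subseteq> {0..P}"
    proof
      fix r assume r: "r \<in> {r. 2*r<P \<and> a*P < b*r}"
      have "a * P \<ge> 0" using that P by simp
      hence "b * r > 0" using r by auto
      hence "r > 0" using that by (simp add: zero_less_mult_iff)
      thus "r \<in> {0..P}" using r by auto
    qed
  qed simp
  have g3: "G 3 8 = T 3 8 7 16 + G 7 16" unfolding G_def T_def
  proof (rule split_sum3[OF fin])
    show "{r. 2 * r < P \<and> 3 * P < 8 * r} = {s. 3 * P < 8 * s \<and> 16 * s < 7 * P} \<union> {r. 2 * r < P \<and> 7 * P < 16 * r}"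
    proof (rule Set.set_eqI)
      fix r
      have "16*r \<noteq> 7*P"
      proof
        assume h: "16*r = 7*P"
        have "even (16*r)" by simp
        hence "even (7*P)" by (simp only: h)
        thus False using P by simp
      qed
      hence "16*r < 7*P \<or> 7*P < 16*r" by linarith
      thus "r \<in> {r. 2 * r < P \<and> 3 * P < 8 * r} \<longleftrightarrow> r \<in> {s. 3 * P < 8 * s \<and> 16 * s < 7 * P} \<union> {r. 2 * r < P \<and> 7 * P < 16 * r}" using P by auto
    qed
    show "{s. 3 * P < 8 * s \<and> 16 * s < 7 * P} \<inter> {r. 2 * r < P \<and> 7 * P < 16 * r} = {}"
      using P by auto
  qed simp_all
  have g7: "G 7 16 = T 7 16 15 32 + G 15 32" unfolding G_def T_def
  proof (rule split_sum3[OF fin])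
    show "{r. 2 * r < P \<and> 7 * P < 16 * r} = {s. 7 * P < 16 * s \<and> 32 * s < 15 * P} \<union> {r. 2 * r < P \<and> 15 * P < 32 * r}"
    proof (rule Set.set_eqI)
      fix r
      have "32*r \<noteq> 15*P"
      proof
        assume h: "32*r = 15*P"
        have "even (32*r)" by simp
        hence "even (15*P)" by (simp only: h)
        thus False using P by simp
      qed
      hence "32*r < 15*P \<or> 15*P < 32*r" by linarith
      thus "r \<in> {r. 2 * r < P \<and> 7 * P < 16 * r} \<longleftrightarrow> r \<in> {s. 7 * P < 16 * s \<and> 32 * s < 15 * P} \<union> {r. 2 * r < P \<and> 15 * P < 32 * r}" using P by auto
    qed
    show "{s. 7 * P < 16 * s \<and> 32 * s < 15 * P} \<inter> {r. 2 * r < P \<and> 15 * P < 32 * r} = {}"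
      using P by auto
  qed simp_all
  have g15: "G 15 32 = T 15 32 31 64 + G 31 64" unfolding G_def T_def
  proof (rule split_sum3[OF fin])
    show "{r. 2 * r < P \<and> 15 * P < 32 * r} = {s. 15 * P < 32 * s \<and> 64 * s < 31 * P} \<union> {r. 2 * r < P \<and> 31 * P < 64 * r}"
    proof (rule Set.set_eqI)
      fix r
      have "64*r \<noteq> 31*P"
      proof
        assume h: "64*r = 31*P"
        have "even (64*r)" by simp
        hence "even (31*P)" by (simp only: h)
        thus False using P by simp
      qed
      hence "64*r < 31*P \<or> 31*P < 64*r" by linarith
      thus "r \<in> {r. 2 * r < P \<and> 15 * P < 32 * r} \<longleftrightarrow> r \<in> {s. 15 * P < 32 * s \<and> 64 * s < 31 * P} \<union> {r. 2 * r < P \<and> 31 * P < 64 * r}" using P by auto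
    qed
    show "{s. 15 * P < 32 * s \<and> 64 * s < 31 * P} \<inter> {r. 2 * r < P \<and> 31 * P < 64 * r} = {}"
      using P by auto
  qed simp_all
  have g31: "G 31 64 = T 31 64 1 2" unfolding G_def T_def by (rule sum.cong) auto
  define x :: int where "x = 2^t"
  have x4: "4^t = x^2" "8^t = x^3" "16^t = x^4" unfolding x_def
    by (simp_all add: eval_nat_numeral power_mult_distrib[symmetric])
  from c4 c8 c16 c32 have
    "P dvd (F 4 - (x * F 8 + x * G 3 8)) + x * (F 8 - (x * F 16 + x * G 7 16))
       + x^2 * (F 16 - (x * F 32 + x * G 15 32)) + x^3 * (F 32 - (x * F 64 + x * G 31 64))"
    unfolding x_def cong_iff_dvd_diff by (intro dvd_add dvd_mult) auto
  moreover have "(F 4 - (x * F 8 + x * G 3 8)) + x * (F 8 - (x * F 16 + x * G 7 16))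
       + x^2 * (F 16 - (x * F 32 + x * G 15 32)) + x^3 * (F 32 - (x * F 64 + x * G 31 64))
     = F 4 - (x^4 * T 0 1 1 64 + x * T 3 8 7 16 + (x + x^2) * T 7 16 15 32
           + (x + x^2 + x^3) * T 15 32 31 64 + (x + x^2 + x^3 + x^4) * T 31 64 1 2)"
    unfolding g3 g7 g15 g31 f64 by (simp add: algebra_simps power2_eq_square power3_eq_cube power4_eq_xxxx)
  ultimately show ?thesis unfolding x4 cong_iff_dvd_diff x_def[symmetric] by simp
qed


lemma sign_pow_id:
  assumes "m = k + h" "k \<ge> 1"
  shows "(-1::int)^k * 4^(2*k-1) * (-1)^h * (2 * (-1)^m * 2^(2*h) * (2 * 2^(2*h))) = 4^(2*k+2*h)"
proof -
  have gen: "(a::int) * b * c * (2 * d * e * (2 * e)) = (a*c*d) * (b * (2*e*(2*e)))" for a b c d e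
    by (simp add: ac_simps)
  obtain j where k: "k = Suc j" using assms(2) by (cases k) auto
  have s: "(-1::int)^k * (-1)^h * (-1)^m = 1" using assms(1)
    by (simp add: power_add[symmetric] ac_simps)
  have "(2::int) * 2^(2*h) * (2 * 2^(2*h)) = 4 * 4^(2*h)"
    by (simp add: power_mult power_mult_distrib[symmetric])
  moreover have "(4::int)^(2*k-1) * (4 * 4^(2*h)) = 4^(2*k+2*h)"
    using k by (simp add: power_add)
  ultimately have "(4::int)^(2*k-1) * ((2::int) * 2^(2*h) * (2 * 2^(2*h))) = 4^(2*k+2*h)" by simp
  moreover have "(-1::int)^k * 4^(2*k-1) * (-1)^h * (2 * (-1)^m * 2^(2*h) * (2 * 2^(2*h)))
     = ((-1)^k * (-1)^h * (-1)^m) * (4^(2*k-1) * ((2::int) * 2^(2*h) * (2 * 2^(2*h))))"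
    using gen[of "(-1)^k" "4^(2*k-1)" "(-1)^h" "(-1)^m" "2^(2*h)"] .
  ultimately show ?thesis using s by simp
qed

theorem mainTheorem6:
  fixes p k :: nat
  assumes "prime p" and "p \<ge> 5" and "1 \<le> k" and "k \<le> (p - 3) div 2"
  defines "t \<equiv> p - 1 - 2 * k"
  shows "qcong p ((-1) ^ k * 4 ^ (2 * k - 1) * euler_num t)
     (16 ^ t * S_sum (int t) p 0 (1/64)
      + 2 ^ t * S_sum (int t) p (3/8) (7/16)
      + (2 ^ t + 4 ^ t) * S_sum (int t) p (7/16) (15/32)
      + (2 ^ t + 4 ^ t + 8 ^ t) * S_sum (int t) p (15/32) (31/64)
      + (2 ^ t + 4 ^ t + 8 ^ t + 16 ^ t) * S_sum (int t) p (31/64) (1/2))"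
proof -
  have p: "prime p" using assms(1) .
  have oddp: "odd p" using p assms(2) prime_odd_nat by auto
  define m where "m = (p - 1) div 2"
  have pm: "p = 2*m+1" using oddp unfolding m_def by presburger
  define h where "h = m - k"
  have "p - 3 = 2 * (m - 1)" using pm by simp
  hence "(p - 3) div 2 = m - 1" by simp
  hence km: "k + 1 \<le> m" using assms(3,4) by simp
  have th: "t = 2*h" unfolding t_def h_def using pm km by simp
  have mkh: "m = k + h" unfolding h_def using km by simp
  have teven: "even t" using th by simp
  have tpos: "0 < t" using th km h_def by simp
  have tlt: "t < p - 1" using t_def assms(3) pm km by simp
  have hdiv: "t div 2 = h" using th by simp
  define P where "P = int p"
  have Podd: "odd P" using oddp unfolding P_def by simp
  have Ppos: "P > 0" using p prime_gt_0_nat unfolding P_def by simp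
  define A where "A = (\<Sum>s\<in>{s::int. 0<s \<and> 4*s<P}. s^t)"
  define W where "W = (\<Sum>u\<in>{1..m}. (-1)^u * (int u)^t)"
  define H where "H = (\<Sum>u\<in>{1..m}. (int u)^t)"
  define c :: int where "c = (-1)^k * 4^(2*k-1) * (-1)^h"
  have e1: "qcong p (esg t) (of_int (Dp p t))" using esg_Dp[OF p oddp] .
  have e2: "euler_num t = (-1)^h * esg t"
    unfolding esg_def hdiv by (simp add: power_add[symmetric] mult.assoc[symmetric] power_mult_distrib[symmetric])
  have lhs: "(-1) ^ k * 4 ^ (2 * k - 1) * euler_num t = of_int c * esg t"
    unfolding e2 c_def by simp
  have q1: "qcong p ((-1) ^ k * 4 ^ (2 * k - 1) * euler_num t) (of_int (c * Dp p t))"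
    unfolding lhs using qcong_mult[OF p pint_of_int[OF p] e1] by simp
  have d1: "[Dp p t = 2 * (-1)^m * 2^t * W] (mod P)" unfolding W_def P_def using Dp_W[OF pm teven tpos] .
  have h0: "[H = 0] (mod P)" unfolding H_def P_def using H0[OF p pm teven tpos tlt] .
  have wa: "W + H = 2 * 2^t * A" unfolding W_def H_def A_def P_def using W_A A_int[OF pm] by simp
  have "[W = 2 * 2^t * A] (mod P)"
  proof -
    have "[W + H = W + 0] (mod P)" by (rule cong_add[OF cong_refl h0])
    thus ?thesis using wa by (simp add: cong_sym)
  qed
  hence "[Dp p t = 2 * (-1)^m * 2^t * (2 * 2^t * A)] (mod P)"
    using d1 cong_trans cong_scalar_left by blast
  hence "[c * Dp p t = c * (2 * (-1)^m * 2^t * (2 * 2^t * A))] (mod P)" by (rule cong_scalar_left)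
  moreover have "c * (2 * (-1)^m * 2^t * (2 * 2^t * A)) = 4^(p-1) * A"
  proof -
    have "c * (2 * (-1)^m * 2^t * (2 * 2^t)) = 4^(2*k+2*h)"
      unfolding c_def th using sign_pow_id[OF mkh assms(3)] by simp
    moreover have "2*k+2*h = p - 1" using pm mkh by simp
    ultimately show ?thesis by (metis mult.assoc mult.left_commute)
  qed
  moreover have "[4^(p-1) * A = 1 * A] (mod P)"
  proof -
    have "\<not> p dvd 4"
    proof
      assume "p dvd 4" hence "p \<le> 4" by (simp add: dvd_imp_le)
      thus False using assms(2) by simp
    qed
    hence "[4^(p-1) = 1] (mod p)" using fermat_theorem[OF p] by blast
    hence "[int (4^(p-1)) = int 1] (mod int p)" using cong_int_iff by blast
    hence "[4^(p-1) = 1] (mod P)" unfolding P_def by simp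
    thus ?thesis by (rule cong_scalar_right)
  qed
  ultimately have cA: "[c * Dp p t = A] (mod P)" by (metis cong_trans mult_1)
  have ch: "[A = 16^t * (\<Sum>s\<in>{s. 0*P < 1*s \<and> 64*s < 1*P}. s^t)
     + 2^t * (\<Sum>s\<in>{s. 3*P < 8*s \<and> 16*s < 7*P}. s^t)
     + (2^t + 4^t) * (\<Sum>s\<in>{s. 7*P < 16*s \<and> 32*s < 15*P}. s^t)
     + (2^t + 4^t + 8^t) * (\<Sum>s\<in>{s. 15*P < 32*s \<and> 64*s < 31*P}. s^t)
     + (2^t + 4^t + 8^t + 16^t) * (\<Sum>s\<in>{s. 31*P < 64*s \<and> 2*s < 1*P}. s^t)] (mod P)"
    unfolding A_def using chain[OF Podd Ppos teven] by simp
  have q2: "qcong p (of_int (c * Dp p t)) (of_int A)"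
    using qcong_of_int[OF p] cA unfolding P_def by blast
  have q3: "qcong p (of_int A) (16 ^ t * S_sum (int t) p 0 (1/64)
      + 2 ^ t * S_sum (int t) p (3/8) (7/16)
      + (2 ^ t + 4 ^ t) * S_sum (int t) p (7/16) (15/32)
      + (2 ^ t + 4 ^ t + 8 ^ t) * S_sum (int t) p (15/32) (31/64)
      + (2 ^ t + 4 ^ t + 8 ^ t + 16 ^ t) * S_sum (int t) p (31/64) (1/2))"
    unfolding S1 S2 S3 S5 S4 using qcong_of_int[OF p ch[unfolded P_def]] by simp
  show ?thesis using qcong_trans[OF p q1 qcong_trans[OF p q2 q3]] .
qed


end
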